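(* Let $X$ be a set, let $c:X\times X\to(-\infty,\infty]$ be a symmetric cost function ($c(x,y)=c(y,x)$), let $Y\subseteq X$, and let $\tilde{c}:Y\times Y\to(-\infty,\infty]$ be the restriction of $c$, i.e. $\tilde{c}(x,y)=c(x,y)$ for all $x,y\in Y$. Let $\mathcal{C}_X$ denote the $c$-class (the image of the transform $K\mapsto K^c$ on subsets of $X$) and $\mathcal{C}_Y$ the $\tilde{c}$-class (the image of the transform $K\mapsto K^{\tilde{c}}$ on subsets of $Y$). Assume that $Y\in \mathcal{C}_X$. Then \[ \mathcal{C}_Y=\{ B\cap Y: \, Y^c \subseteq B \in \mathcal{C}_X\}.\]
   Context: For a symmetric cost $c:X\times X\to(-\infty,\infty]$ and $K\subseteq X$, the $c$-dual set is $K^c=\{y\in X:\ c(x,y)\ge 0 \ \forall x\in K\}$; analogously, for $A\subseteq Y$, $A^{\tilde{c}}=\{y\in Y:\ \tilde{c}(x,y)\ge 0\ \forall x\in A\}$. The map $K\mapsto K^c$ is an order reversing quasi involution, and its image $\mathcal{C}_X=\{K^c: K\subseteq X\}$ consists exactly of the sets $K\subseteq X$ with $K^{cc}=K$ (similarly $\mathcal{C}_Y$ consists of the $A\subseteq Y$ with $A^{\tilde{c}\tilde{c}}=A$). Here $Y^c$ denotes the $c$-dual of $Y$ taken in $X$. *)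

theory Defs
  imports "HOL-Analysis.Analysis"
begin

definition cdual :: "'a set \<Rightarrow> ('a \<Rightarrow> 'a \<Rightarrow> ereal) \<Rightarrow> 'a set \<Rightarrow> 'a set" where
  "cdual X c K = {y \<in> X. \<forall>x\<in>K. c x y \<ge> 0}"

definition cclass :: "'a set \<Rightarrow> ('a \<Rightarrow> 'a \<Rightarrow> ereal) \<Rightarrow> 'a set set" where
  "cclass X c = {cdual X c K | K. K \<subseteq> X}"

end

theory Submission
  imports Defs
begin

lemma cd_anti: "A \<subseteq> B \<Longrightarrow> cdual X c B \<subseteq> cdual X c A"
  unfolding cdual_def by auto

lemma cd_sub: "cdual X c K \<subseteq> X"
  unfolding cdual_def by auto

lemma cd_ext: "\<forall>x\<in>X. \<forall>y\<in>X. c x y = c y x \<Longrightarrow> K \<subseteq> X \<Longrightarrow> K \<subseteq> cdual X c (cdual X c K)"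
  unfolding cdual_def by auto

lemma cd_triple: "\<forall>x\<in>X. \<forall>y\<in>X. c x y = c y x \<Longrightarrow> K \<subseteq> X \<Longrightarrow>
   cdual X c (cdual X c (cdual X c K)) = cdual X c K"
  by (meson cd_anti cd_ext cd_sub subset_antisym)

theorem lemma8p15:
  fixes X Y :: "'a set" and c ct :: "'a \<Rightarrow> 'a \<Rightarrow> ereal"
  assumes c_range: "\<forall>x\<in>X. \<forall>y\<in>X. c x y \<noteq> -\<infinity>"
    and c_sym: "\<forall>x\<in>X. \<forall>y\<in>X. c x y = c y x"
    and YX: "Y \<subseteq> X"
    and ct_restr: "\<forall>x\<in>Y. \<forall>y\<in>Y. ct x y = c x y"
    and Y_class: "Y \<in> cclass X c"
  shows "cclass Y ct = {B \<inter> Y | B. cdual X c Y \<subseteq> B \<and> B \<in> cclass X c}"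
proof -
  have red: "cdual Y ct A = cdual X c A \<inter> Y" if "A \<subseteq> Y" for A
    using that YX ct_restr unfolding cdual_def by (auto simp: subset_iff)
  obtain L where L: "L \<subseteq> X" "Y = cdual X c L" using Y_class unfolding cclass_def by auto
  have Ycc: "cdual X c (cdual X c Y) = Y" using L cd_triple[OF c_sym] by metis
  show ?thesis
  proof (rule set_eqI, rule iffI)
    fix S assume "S \<in> cclass Y ct"
    then obtain A where A: "A \<subseteq> Y" "S = cdual Y ct A" unfolding cclass_def by auto
    have "S = cdual X c A \<inter> Y" using red A by auto
    moreover have "cdual X c Y \<subseteq> cdual X c A" using A cd_anti by metis
    moreover have "cdual X c A \<in> cclass X c" using A YX unfolding cclass_def by auto
    ultimately show "S \<in> {B \<inter> Y | B. cdual X c Y \<subseteq> B \<and> B \<in> cclass X c}" by blast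
  next
    fix S assume "S \<in> {B \<inter> Y | B. cdual X c Y \<subseteq> B \<and> B \<in> cclass X c}"
    then obtain B K where B: "S = B \<inter> Y" "cdual X c Y \<subseteq> B" "K \<subseteq> X" "B = cdual X c K"
      unfolding cclass_def by auto
    have Bcc: "cdual X c (cdual X c B) = B" using B(3,4) cd_triple[OF c_sym] by metis
    have sub: "cdual X c B \<subseteq> Y" using cd_anti[OF B(2), of X c] Ycc by simp
    have "cdual Y ct (cdual X c B) = S" using red[OF sub] Bcc B(1) by simp
    then show "S \<in> cclass Y ct" using sub unfolding cclass_def by blast
  qed
qed

end
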